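(* Let $q$ be a prime power, $m,n$ positive integers and $0\le v\le n$. For every elementary linear subspace $\mathcal V$ of $\mathrm{GF}(q^m)^n$ of dimension $v$, the rank diameter satisfies $\delta(\mathcal V)\le v$. Moreover, if $v\le m$, then $\delta(\mathcal V)=v$.
   Context: For $\mathbf x=(x_0,\dots,x_{n-1})\in\mathrm{GF}(q^m)^n$, $\mathrm{rk}(\mathbf x)$ is the dimension over $\mathrm{GF}(q)$ of the $\mathrm{GF}(q)$-span of $x_0,\dots,x_{n-1}$. A linear subspace of the $\mathrm{GF}(q^m)$-vector space $\mathrm{GF}(q^m)^n$ is elementary if it has a basis consisting of vectors in $\mathrm{GF}(q)^n$. The rank diameter of a linear subspace $\mathcal L$ is $\delta(\mathcal L)=\max_{\mathbf x\in\mathcal L}\mathrm{rk}(\mathbf x)$. *)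

theory Defs
  imports "HOL-Analysis.Analysis" "HOL-Computational_Algebra.Primes"
begin

text \<open>A subfield F of a field 'k (here: GF(q) inside GF(q^m)).\<close>
definition is_subfield :: "'k::field set \<Rightarrow> bool" where
  "is_subfield F \<longleftrightarrow> 0 \<in> F \<and> 1 \<in> F \<and>
     (\<forall>a\<in>F. \<forall>b\<in>F. a + b \<in> F \<and> a * b \<in> F) \<and>
     (\<forall>a\<in>F. - a \<in> F) \<and> (\<forall>a\<in>F. a \<noteq> 0 \<longrightarrow> inverse a \<in> F)"

definition F_indep :: "'k::field set \<Rightarrow> 'k set \<Rightarrow> bool" where
  "F_indep F B \<longleftrightarrow> finite B \<and>
     (\<forall>c. (\<forall>b\<in>B. c b \<in> F) \<longrightarrow> (\<Sum>b\<in>B. c b * b) = 0 \<longrightarrow> (\<forall>b\<in>B. c b = 0))"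

definition F_span :: "'k::field set \<Rightarrow> 'k set \<Rightarrow> 'k set" where
  "F_span F S = {(\<Sum>s\<in>T. c s * s) | T c. finite T \<and> T \<subseteq> S \<and> (\<forall>s\<in>T. c s \<in> F)}"

definition F_dim :: "'k::field set \<Rightarrow> 'k set \<Rightarrow> nat" where
  "F_dim F W = Max {card B | B. B \<subseteq> W \<and> F_indep F B}"

definition rk :: "'k::field set \<Rightarrow> 'k ^ 'n \<Rightarrow> nat" where
  "rk F x = F_dim F (F_span F (range (\<lambda>i. x $ i)))"

definition elementary :: "'k::field set \<Rightarrow> ('k ^ 'n) set \<Rightarrow> bool" where
  "elementary F V \<longleftrightarrow> (\<exists>B. B \<subseteq> {x. \<forall>i. x $ i \<in> F} \<and> vec.independent B \<and> vec.span B = V)"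

definition rank_diameter :: "'k::field set \<Rightarrow> ('k ^ 'n) set \<Rightarrow> nat" where
  "rank_diameter F V = Max (rk F ` V)"

end

theory Submission
  imports Defs "HOL-Library.FuncSet"
begin

lemma sf_closed:
  assumes "is_subfield F"
  shows "0 \<in> F" "1 \<in> F" "a \<in> F \<Longrightarrow> b \<in> F \<Longrightarrow> a + b \<in> F"
    "a \<in> F \<Longrightarrow> b \<in> F \<Longrightarrow> a * b \<in> F" "a \<in> F \<Longrightarrow> - a \<in> F"
    "a \<in> F \<Longrightarrow> b \<in> F \<Longrightarrow> a - b \<in> F"
    "a \<in> F \<Longrightarrow> inverse a \<in> F"
    "a \<in> F \<Longrightarrow> b \<in> F \<Longrightarrow> a / b \<in> F"
proof -
  note d = assms[unfolded is_subfield_def]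
  show "0 \<in> F" "1 \<in> F" using d by auto
  show "a \<in> F \<Longrightarrow> b \<in> F \<Longrightarrow> a + b \<in> F" using d by auto
  show "a \<in> F \<Longrightarrow> b \<in> F \<Longrightarrow> a * b \<in> F" using d by auto
  show "a \<in> F \<Longrightarrow> - a \<in> F" using d by auto
  show "a \<in> F \<Longrightarrow> b \<in> F \<Longrightarrow> a - b \<in> F"
    using d by (simp only: diff_conv_add_uminus)
  show i: "a \<in> F \<Longrightarrow> inverse a \<in> F" using d by (cases "a = 0") auto
  show "a \<in> F \<Longrightarrow> b \<in> F \<Longrightarrow> a / b \<in> F"
    using d by (cases "b = 0") (auto simp: divide_inverse)
qed

lemma sf_sum:
  assumes "is_subfield F" "\<And>x. x \<in> A \<Longrightarrow> f x \<in> F"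
  shows "sum f A \<in> F"
  using assms(2)
proof (induct A rule: infinite_finite_induct)
  case (insert x A) then show ?case using sf_closed[OF assms(1)] by auto
qed (use sf_closed[OF assms(1)] in auto)

lemma F_span_rep:
  assumes "finite A" "y \<in> F_span F A" "is_subfield F"
  shows "\<exists>c. (\<forall>s\<in>A. c s \<in> F) \<and> y = (\<Sum>s\<in>A. c s * s)"
proof -
  from assms(2) obtain T c where T: "y = (\<Sum>s\<in>T. c s * s)" "finite T" "T \<subseteq> A" "\<forall>s\<in>T. c s \<in> F"
    unfolding F_span_def by auto
  define c' where "c' s = (if s \<in> T then c s else 0)" for s
  have "(\<Sum>s\<in>A. c' s * s) = (\<Sum>s\<in>T. c' s * s)"
    by (rule sum.mono_neutral_right) (use T assms(1) in \<open>auto simp: c'_def\<close>)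
  also have "\<dots> = y" using T by (simp add: c'_def)
  finally have "y = (\<Sum>s\<in>A. c' s * s)" by simp
  moreover have "\<forall>s\<in>A. c' s \<in> F" using T(4) sf_closed(1)[OF assms(3)] by (simp add: c'_def)
  ultimately show ?thesis by blast
qed

lemma F_span_intro:
  assumes "finite A" "\<forall>s\<in>A. c s \<in> F"
  shows "(\<Sum>s\<in>A. c s * s) \<in> F_span F A"
  using assms unfolding F_span_def by blast

lemma F_span_comb:
  assumes sf: "is_subfield F" and fA: "finite A" and fI: "finite I"
    and e: "\<forall>j\<in>I. e j \<in> F" and y: "\<forall>j\<in>I. y j \<in> F_span F A"
  shows "(\<Sum>j\<in>I. e j * y j) \<in> F_span F A"
proof -
  have "\<forall>j\<in>I. \<exists>c. (\<forall>s\<in>A. c s \<in> F) \<and> y j = (\<Sum>s\<in>A. c s * s)"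
    using F_span_rep[OF fA _ sf] y by blast
  then have "\<exists>c. \<forall>j\<in>I. (\<forall>s\<in>A. c j s \<in> F) \<and> y j = (\<Sum>s\<in>A. c j s * s)"
    by (rule bchoice)
  then obtain c where c: "\<forall>j\<in>I. (\<forall>s\<in>A. c j s \<in> F) \<and> y j = (\<Sum>s\<in>A. c j s * s)"
    by blast
  have "(\<Sum>j\<in>I. e j * y j) = (\<Sum>j\<in>I. \<Sum>s\<in>A. e j * c j s * s)"
  proof (rule sum.cong[OF refl])
    fix j assume "j \<in> I"
    then have "y j = (\<Sum>s\<in>A. c j s * s)" using c by blast
    then show "e j * y j = (\<Sum>s\<in>A. e j * c j s * s)"
      by (simp add: sum_distrib_left mult.assoc)
  qed
  also have "\<dots> = (\<Sum>s\<in>A. \<Sum>j\<in>I. e j * c j s * s)"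
    by (rule sum.swap)
  also have "\<dots> = (\<Sum>s\<in>A. (\<Sum>j\<in>I. e j * c j s) * s)"
    by (simp add: sum_distrib_right)
  also have "\<dots> \<in> F_span F A"
  proof (rule F_span_intro[OF fA], rule ballI)
    fix s assume s: "s \<in> A"
    show "(\<Sum>j\<in>I. e j * c j s) \<in> F"
    proof (rule sf_sum[OF sf])
      fix j assume "j \<in> I"
      then show "e j * c j s \<in> F" using c e s sf_closed(4)[OF sf] by blast
    qed
  qed
  finally show ?thesis .
qed

lemma F_span_base:
  assumes "is_subfield F" "s \<in> A"
  shows "s \<in> F_span F A"
proof -
  have "(\<Sum>t\<in>{s}. (\<lambda>_. 1) t * t) \<in> F_span F A"
    by (rule F_span_def[THEN eqset_imp_iff, THEN iffD2], rule CollectI,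
        rule exI[of _ "{s}"], rule exI[of _ "\<lambda>_. 1"])
       (use assms sf_closed(2)[OF assms(1)] in simp)
  then show ?thesis by simp
qed

lemma F_span_mono_span:
  assumes sf: "is_subfield F" and fA: "finite A" and sub: "S \<subseteq> F_span F A"
  shows "F_span F S \<subseteq> F_span F A"
proof
  fix y assume "y \<in> F_span F S"
  then obtain T c where T: "y = (\<Sum>s\<in>T. c s * s)" "finite T" "T \<subseteq> S" "\<forall>s\<in>T. c s \<in> F"
    unfolding F_span_def by auto
  show "y \<in> F_span F A" unfolding T(1)
    by (rule F_span_comb[OF sf fA T(2)]) (use T sub in auto)
qed

lemma card_F_span:
  fixes F :: "'k::{field,finite} set"
  assumes sf: "is_subfield F" and fA: "finite A"
  shows "card (F_span F A) \<le> card F ^ card A"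
proof -
  let ?g = "\<lambda>c. \<Sum>s\<in>A. c s * s"
  have "F_span F A \<subseteq> ?g ` (PiE A (\<lambda>_. F))"
  proof
    fix y assume "y \<in> F_span F A"
    then obtain c where c: "\<forall>s\<in>A. c s \<in> F" "y = (\<Sum>s\<in>A. c s * s)"
      using F_span_rep[OF fA _ sf] by blast
    have "restrict c A \<in> PiE A (\<lambda>_. F)" using c by auto
    moreover have "y = (\<Sum>s\<in>A. restrict c A s * s)" using c(2) by simp
    ultimately show "y \<in> ?g ` (PiE A (\<lambda>_. F))"
      using image_eqI[of y ?g "restrict c A" "PiE A (\<lambda>_. F)"] by blast
  qed
  then have "card (F_span F A) \<le> card (?g ` (PiE A (\<lambda>_. F)))"
    by (rule card_mono[rotated]) simp
  also have "\<dots> \<le> card (PiE A (\<lambda>_. F))"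
    by (rule card_image_le) (simp add: finite_PiE fA)
  also have "\<dots> = card F ^ card A"
    by (simp add: card_PiE fA)
  finally show ?thesis .
qed

lemma indep_card:
  fixes F :: "'k::{field,finite} set"
  assumes sf: "is_subfield F" and ind: "F_indep F D" and sub: "D \<subseteq> F_span F A" and fA: "finite A"
  shows "card F ^ card D \<le> card (F_span F A)"
proof -
  let ?g = "\<lambda>c. \<Sum>d\<in>D. c d * d"
  have fD: "finite D" using ind unfolding F_indep_def by blast
  have inj: "inj_on ?g (PiE D (\<lambda>_. F))"
  proof (rule inj_onI)
    fix c1 c2 assume c1: "c1 \<in> PiE D (\<lambda>_. F)" and c2: "c2 \<in> PiE D (\<lambda>_. F)"
      and eq: "?g c1 = ?g c2"
    have "(\<Sum>d\<in>D. (c1 d - c2 d) * d) = ?g c1 - ?g c2"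
      by (simp add: left_diff_distrib sum_subtractf)
    also have "\<dots> = 0" using eq by simp
    finally have z: "(\<Sum>d\<in>D. (c1 d - c2 d) * d) = 0" .
    have inF: "\<forall>d\<in>D. c1 d - c2 d \<in> F"
      using c1 c2 sf_closed(6)[OF sf] by (auto simp: PiE_iff)
    have allc: "\<forall>c. (\<forall>b\<in>D. c b \<in> F) \<longrightarrow> (\<Sum>b\<in>D. c b * b) = 0 \<longrightarrow> (\<forall>b\<in>D. c b = 0)"
      using ind unfolding F_indep_def by blast
    have "(\<forall>b\<in>D. c1 b - c2 b \<in> F) \<longrightarrow> (\<Sum>b\<in>D. (c1 b - c2 b) * b) = 0 \<longrightarrow> (\<forall>b\<in>D. c1 b - c2 b = 0)"
      using allc[THEN spec[where x="\<lambda>d. c1 d - c2 d"]] by simp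
    then have "\<forall>d\<in>D. c1 d - c2 d = 0" using inF z by blast
    then show "c1 = c2" using c1 c2 by (intro PiE_ext[OF c1 c2]) auto
  qed
  have img: "?g ` (PiE D (\<lambda>_. F)) \<subseteq> F_span F A"
  proof
    fix y assume "y \<in> ?g ` (PiE D (\<lambda>_. F))"
    then obtain c where c: "c \<in> PiE D (\<lambda>_. F)" "y = ?g c" by blast
    show "y \<in> F_span F A" unfolding c(2)
      by (rule F_span_comb[OF sf fA fD]) (use c(1) sub in \<open>auto simp: PiE_iff\<close>)
  qed
  have "card F ^ card D = card (PiE D (\<lambda>_. F))" by (simp add: card_PiE fD)
  also have "\<dots> = card (?g ` (PiE D (\<lambda>_. F)))" by (rule card_image[OF inj, symmetric])
  also have "\<dots> \<le> card (F_span F A)" by (rule card_mono[OF _ img]) simp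
  finally show ?thesis .
qed

lemma card_F_ge2:
  fixes F :: "'k::{field,finite} set"
  assumes sf: "is_subfield F"
  shows "2 \<le> card F"
proof -
  have "{0, 1} \<subseteq> F" using sf_closed(1,2)[OF sf] by simp
  then have "card {0::'k, 1} \<le> card F" by (rule card_mono[rotated]) simp
  then show ?thesis by simp
qed

lemma fin_cards:
  fixes W :: "'k::{field,finite} set"
  shows "finite {card B |B. B \<subseteq> W \<and> F_indep F B}"
proof -
  have "{card B |B. B \<subseteq> W \<and> F_indep F B} = card ` {B. B \<subseteq> W \<and> F_indep F B}" by blast
  then show ?thesis by simp
qed

lemma F_dim_le:
  fixes F :: "'k::{field,finite} set"
  assumes sf: "is_subfield F" and fA: "finite A" and W: "W \<subseteq> F_span F A"
  shows "F_dim F W \<le> card A"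
  unfolding F_dim_def
proof (rule Max.boundedI[OF fin_cards])
  have "F_indep F {}" unfolding F_indep_def by simp
  then show "{card B |B. B \<subseteq> W \<and> F_indep F B} \<noteq> {}" by blast
next
  fix a assume "a \<in> {card B |B. B \<subseteq> W \<and> F_indep F B}"
  then obtain B where B: "a = card B" "B \<subseteq> W" "F_indep F B" by blast
  have "card F ^ card B \<le> card (F_span F A)"
    by (rule indep_card[OF sf B(3) _ fA]) (use B(2) W in blast)
  also have "\<dots> \<le> card F ^ card A" by (rule card_F_span[OF sf fA])
  finally have "card F ^ card B \<le> card F ^ card A" .
  then have "card B \<le> card A"
    by (rule power_le_imp_le_exp[rotated]) (use card_F_ge2[OF sf] in simp)
  then show "a \<le> card A" using B(1) by simp
qed

lemma F_dim_ge:
  fixes F :: "'k::{field,finite} set"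
  assumes "B \<subseteq> W" "F_indep F B"
  shows "card B \<le> F_dim F W"
  unfolding F_dim_def by (rule Max_ge[OF fin_cards]) (use assms in blast)

lemma indep_subset:
  fixes F :: "'k::field set"
  assumes sf: "is_subfield F" and ind: "F_indep F D" and CD: "C \<subseteq> D"
  shows "F_indep F C"
  unfolding F_indep_def
proof (intro conjI allI impI)
  have fD: "finite D" using ind unfolding F_indep_def by blast
  then show fC: "finite C" using CD by (rule finite_subset[rotated])
  fix c assume c: "\<forall>b\<in>C. c b \<in> F" and s: "(\<Sum>b\<in>C. c b * b) = 0"
  define c' where "c' b = (if b \<in> C then c b else 0)" for b
  have "(\<Sum>b\<in>D. c' b * b) = (\<Sum>b\<in>C. c' b * b)"
    by (rule sum.mono_neutral_right) (use fD CD in \<open>auto simp: c'_def\<close>)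
  also have "\<dots> = (\<Sum>b\<in>C. c b * b)" by (simp add: c'_def)
  finally have s': "(\<Sum>b\<in>D. c' b * b) = 0" using s by simp
  have allc: "\<forall>c. (\<forall>b\<in>D. c b \<in> F) \<longrightarrow> (\<Sum>b\<in>D. c b * b) = 0 \<longrightarrow> (\<forall>b\<in>D. c b = 0)"
    using ind unfolding F_indep_def by blast
  have imp: "(\<forall>b\<in>D. c' b \<in> F) \<longrightarrow> (\<Sum>b\<in>D. c' b * b) = 0 \<longrightarrow> (\<forall>b\<in>D. c' b = 0)"
    using allc[THEN spec[where x=c']] by simp
  have "\<forall>b\<in>D. c' b \<in> F" using c sf_closed(1)[OF sf] by (simp add: c'_def)
  then have "\<forall>b\<in>D. c' b = 0" using imp s' by blast
  show "\<forall>b\<in>C. c b = 0"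
  proof
    fix b assume bC: "b \<in> C"
    then have "b \<in> D" using CD by blast
    then have "c' b = 0" using \<open>\<forall>b\<in>D. c' b = 0\<close> by blast
    then show "c b = 0" using bC by (simp add: c'_def)
  qed
qed

lemma exists_indep:
  fixes F :: "'k::{field,finite} set"
  assumes sf: "is_subfield F" and cardk: "CARD('k) = card F ^ m"
  shows "\<exists>D. F_indep F D \<and> m \<le> card D"
proof -
  let ?S = "{card B |B. B \<subseteq> UNIV \<and> F_indep F B}"
  have "F_indep F {}" unfolding F_indep_def by simp
  then have ne: "?S \<noteq> {}" by blast
  have "Max ?S \<in> ?S" by (rule Max_in[OF fin_cards ne])
  then obtain D where D0: "Max ?S = card D" "F_indep F D" by auto
  have D: "card D = Max ?S" "F_indep F D" using D0 by simp_all
  have maxD: "card B \<le> card D" if "F_indep F B" for B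
    using F_dim_ge[of B UNIV F] that D(1) unfolding F_dim_def by simp
  have fD: "finite D" using D(2) unfolding F_indep_def by blast
  have allD: "\<forall>c. (\<forall>b\<in>D. c b \<in> F) \<longrightarrow> (\<Sum>b\<in>D. c b * b) = 0 \<longrightarrow> (\<forall>b\<in>D. c b = 0)"
    using D(2) unfolding F_indep_def by blast
  have span: "UNIV \<subseteq> F_span F D"
  proof
    fix y :: 'k
    show "y \<in> F_span F D"
    proof (rule ccontr)
      assume ny: "y \<notin> F_span F D"
      have yD: "y \<notin> D" using F_span_base[OF sf] ny by blast
      have "F_indep F (insert y D)"
        unfolding F_indep_def
      proof (intro conjI allI impI)
        show "finite (insert y D)" using fD by simp
        fix c assume c: "\<forall>b\<in>insert y D. c b \<in> F" and s: "(\<Sum>b\<in>insert y D. c b * b) = 0"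
        have s2: "c y * y + (\<Sum>b\<in>D. c b * b) = 0" using s fD yD by simp
        have cy: "c y = 0"
        proof (rule ccontr)
          assume cy0: "c y \<noteq> 0"
          have "(\<Sum>b\<in>D. (- c b / c y) * b) = (- 1 / c y) * (\<Sum>b\<in>D. c b * b)"
            by (simp add: sum_distrib_left)
          also have "\<dots> = (- 1 / c y) * (- (c y * y))" using s2
            by (metis add_eq_0_iff)
          also have "\<dots> = y" using cy0 by (simp add: field_simps)
          finally have yeq: "y = (\<Sum>b\<in>D. (- c b / c y) * b)" by simp
          have "(\<Sum>b\<in>D. (- c b / c y) * b) \<in> F_span F D"
          proof (rule F_span_intro[OF fD], rule ballI)
            fix b assume "b \<in> D"
            then have "c b \<in> F" "c y \<in> F" using c by auto
            then show "- c b / c y \<in> F" using sf_closed(5,8)[OF sf] by blast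
          qed
          then show False using ny yeq by simp
        qed
        then have "(\<Sum>b\<in>D. c b * b) = 0" using s2 by simp
        moreover have "\<forall>b\<in>D. c b \<in> F" using c by simp
        ultimately have "\<forall>b\<in>D. c b = 0" using allD[THEN spec[where x=c]] by blast
        then show "\<forall>b\<in>insert y D. c b = 0" using cy by simp
      qed
      then have "card (insert y D) \<le> card D" by (rule maxD)
      then show False using fD yD by simp
    qed
  qed
  have "card F ^ m = card (UNIV :: 'k set)" using cardk by simp
  also have "\<dots> \<le> card (F_span F D)" by (rule card_mono[OF _ span]) simp
  also have "\<dots> \<le> card F ^ card D" by (rule card_F_span[OF sf fD])
  finally have "card F ^ m \<le> card F ^ card D" .
  then have "m \<le> card D"
    by (rule power_le_imp_le_exp[rotated]) (use card_F_ge2[OF sf] in simp)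
  then show ?thesis using D(2) by blast
qed

definition dotF :: "'a::comm_ring_1 ^ 'n \<Rightarrow> 'a ^ 'n \<Rightarrow> 'a" where
  "dotF b a = (\<Sum>i\<in>UNIV. b $ i * a $ i)"

definition Fvec :: "'a set \<Rightarrow> ('a ^ 'n) set" where
  "Fvec F = {x. \<forall>i. x $ i \<in> F}"

lemma dotF_diff: "dotF b (x - y) = dotF b x - dotF b y"
  by (simp add: dotF_def right_diff_distrib sum_subtractf)

lemma dotF_smult: "dotF b (c *s x) = c * dotF b x"
  by (simp add: dotF_def sum_distrib_left mult.left_commute)

lemma dotF_sum: "finite S \<Longrightarrow> dotF b (sum f S) = (\<Sum>s\<in>S. dotF b (f s))"
  unfolding dotF_def by (simp add: sum_distrib_left) (rule sum.swap)

lemma dotF_axis: "dotF b (axis i 1) = b $ i"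
  unfolding dotF_def axis_def by (simp add: if_distrib[of "\<lambda>x. _ * x"] cong: if_cong)

lemma dotF_F:
  assumes sf: "is_subfield F" and "b \<in> Fvec F" "a \<in> Fvec F"
  shows "dotF b a \<in> F"
  unfolding dotF_def
  by (rule sf_sum[OF sf]) (use assms sf_closed(4)[OF sf] in \<open>auto simp: Fvec_def\<close>)

lemma Fvec_diff: "is_subfield F \<Longrightarrow> x \<in> Fvec F \<Longrightarrow> y \<in> Fvec F \<Longrightarrow> x - y \<in> Fvec F"
  unfolding Fvec_def by (auto intro: sf_closed(6))

lemma Fvec_smult: "is_subfield F \<Longrightarrow> c \<in> F \<Longrightarrow> y \<in> Fvec F \<Longrightarrow> c *s y \<in> Fvec F"
  unfolding Fvec_def by (auto intro: sf_closed(4))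

lemma Fvec_sum: "is_subfield F \<Longrightarrow> (\<And>s. s \<in> S \<Longrightarrow> f s \<in> Fvec F) \<Longrightarrow> sum f S \<in> Fvec F"
  unfolding Fvec_def by (auto intro!: sf_sum)

lemma Fvec_axis: "is_subfield F \<Longrightarrow> axis i 1 \<in> Fvec F"
  unfolding Fvec_def axis_def by (auto intro: sf_closed(1,2))

lemma dual_basis:
  fixes F :: "'k::field set" and B :: "('k ^ 'n) set"
  assumes sf: "is_subfield F"
  shows "finite B \<Longrightarrow> B \<subseteq> Fvec F \<Longrightarrow> vec.independent B \<Longrightarrow>
    \<forall>b\<in>B. \<exists>a. a \<in> Fvec F \<and> (\<forall>b'\<in>B. dotF b' a = (if b' = b then 1 else 0))"
proof (induct B rule: finite_induct)
  case empty
  show ?case by simp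
next
  case (insert b0 B)
  have BF: "B \<subseteq> Fvec F" and b0F: "b0 \<in> Fvec F" using insert.prems(1) by auto
  have ii: "vec.independent B \<and> b0 \<notin> vec.span B"
    using vec.independent_insert[of b0 B] insert.prems(2) insert.hyps(2) by simp
  then have indB: "vec.independent B" and nsp: "b0 \<notin> vec.span B" by auto
  have "\<forall>b\<in>B. \<exists>a. a \<in> Fvec F \<and> (\<forall>b'\<in>B. dotF b' a = (if b' = b then 1 else 0))"
    using insert.hyps(3) BF indB by blast
  then have "\<exists>A. \<forall>b\<in>B. A b \<in> Fvec F \<and> (\<forall>b'\<in>B. dotF b' (A b) = (if b' = b then 1 else 0))"
    by (rule bchoice)
  then obtain A where A: "\<forall>b\<in>B. A b \<in> Fvec F \<and> (\<forall>b'\<in>B. dotF b' (A b) = (if b' = b then 1 else 0))"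
    by blast
  define P where "P i = axis i 1 - (\<Sum>b\<in>B. (b $ i) *s A b)" for i
  have PF: "P i \<in> Fvec F" for i
    unfolding P_def
  proof (rule Fvec_diff[OF sf Fvec_axis[OF sf]], rule Fvec_sum[OF sf])
    fix b assume b: "b \<in> B"
    then have "b $ i \<in> F" using BF by (auto simp: Fvec_def)
    then show "b $ i *s A b \<in> Fvec F" using A b by (intro Fvec_smult[OF sf]) auto
  qed
  have dP: "dotF c (P i) = c $ i - (\<Sum>b\<in>B. b $ i * dotF c (A b))" for c i
    unfolding P_def by (simp add: dotF_diff dotF_sum dotF_smult dotF_axis insert.hyps(1))
  have P0: "dotF b'' (P i) = 0" if b'': "b'' \<in> B" for b'' i
  proof -
    have "(\<Sum>b\<in>B. b $ i * dotF b'' (A b)) = (\<Sum>b\<in>B. if b'' = b then b $ i else 0)"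
      by (rule sum.cong[OF refl]) (use A b'' in auto)
    also have "\<dots> = b'' $ i" using b'' insert.hyps(1) by simp
    finally show ?thesis using dP by simp
  qed
  have "\<exists>i. dotF b0 (P i) \<noteq> 0"
  proof (rule ccontr)
    assume "\<not> (\<exists>i. dotF b0 (P i) \<noteq> 0)"
    then have z: "\<forall>i. dotF b0 (P i) = 0" by simp
    have "b0 = (\<Sum>b\<in>B. dotF b0 (A b) *s b)"
    proof (subst vec_eq_iff, rule allI)
      fix i
      have "b0 $ i = (\<Sum>b\<in>B. b $ i * dotF b0 (A b))" using z dP[of b0 i] by simp
      then show "b0 $ i = (\<Sum>b\<in>B. dotF b0 (A b) *s b) $ i" by (simp add: mult.commute)
    qed
    moreover have "(\<Sum>b\<in>B. dotF b0 (A b) *s b) \<in> vec.span B"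
      by (intro vec.span_sum vec.span_scale vec.span_base)
    ultimately show False using nsp by simp
  qed
  then obtain i where di: "dotF b0 (P i) \<noteq> 0" by blast
  define d where "d = dotF b0 (P i)"
  have dF: "d \<in> F" unfolding d_def by (rule dotF_F[OF sf b0F PF])
  define as where "as = (1 / d) *s P i"
  have asF: "as \<in> Fvec F" unfolding as_def
    by (rule Fvec_smult[OF sf _ PF]) (use dF sf_closed(2,8)[OF sf] in blast)
  have as1: "dotF b0 as = 1" unfolding as_def using di by (simp add: dotF_smult d_def)
  have as0: "dotF b'' as = 0" if "b'' \<in> B" for b''
    unfolding as_def using P0[OF that] by (simp add: dotF_smult)
  show ?case
  proof (rule ballI)
    fix b assume b: "b \<in> insert b0 B"
    show "\<exists>a. a \<in> Fvec F \<and> (\<forall>b'\<in>insert b0 B. dotF b' a = (if b' = b then 1 else 0))"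
    proof (cases "b = b0")
      case True
      have "\<forall>b'\<in>insert b0 B. dotF b' as = (if b' = b then 1 else 0)"
        using True as0 as1 insert.hyps(2) by auto
      then show ?thesis using asF by blast
    next
      case False
      then have bB: "b \<in> B" using b by simp
      define a where "a = A b - dotF b0 (A b) *s as"
      have aF: "a \<in> Fvec F" unfolding a_def
        using A bB asF b0F dotF_F[OF sf b0F, of "A b"]
        by (intro Fvec_diff[OF sf] Fvec_smult[OF sf]) auto
      have "\<forall>b'\<in>insert b0 B. dotF b' a = (if b' = b then 1 else 0)"
      proof
        fix b' assume b': "b' \<in> insert b0 B"
        show "dotF b' a = (if b' = b then 1 else 0)"
        proof (cases "b' = b0")
          case True
          then show ?thesis using False as1 by (simp add: a_def dotF_diff dotF_smult)
        next
          case False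
          then have "b' \<in> B" using b' by simp
          then show ?thesis using as0 A bB by (simp add: a_def dotF_diff dotF_smult)
        qed
      qed
      then show ?thesis using aF by blast
    qed
  qed
qed

theorem proposition2:
  fixes F :: "'k::{field,finite} set"
    and V :: "('k ^ 'n) set"
    and q m n v :: nat
  assumes q_pp: "\<exists>p k. prime p \<and> k > 0 \<and> q = p ^ k"
    and m_pos: "m > 0" and n_pos: "n > 0"
    and n_def: "CARD('n) = n"
    and K_card: "CARD('k) = q ^ m"
    and F_sub: "is_subfield F" and F_card: "card F = q"
    and v_le: "v \<le> n"
    and V_sub: "vec.subspace V"
    and V_elem: "elementary F V"
    and V_dim: "vec.dim V = v"
  shows "rank_diameter F V \<le> v \<and> (v \<le> m \<longrightarrow> rank_diameter F V = v)"
proof -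
  from V_elem obtain B where B: "B \<subseteq> {x. \<forall>i. x $ i \<in> F}" "vec.independent B" "vec.span B = V"
    unfolding elementary_def by blast
  have BF: "B \<subseteq> Fvec F" using B(1) by (simp add: Fvec_def)
  have fB: "finite B" by simp
  have cardB: "card B = v" using vec.dim_span_eq_card_independent[OF B(2)] B(3) V_dim by simp
  have fV: "finite V" by simp
  have V0: "0 \<in> V" using V_sub by (rule vec.subspace_0)
  have le: "\<forall>x\<in>V. rk F x \<le> v"
  proof
    fix x assume "x \<in> V"
    then have "x \<in> range (\<lambda>u. \<Sum>b\<in>B. u b *s b)" using vec.span_finite[OF fB] B(3) by simp
    then obtain u where x: "x = (\<Sum>b\<in>B. u b *s b)" by blast
    have sub: "range (\<lambda>i. x $ i) \<subseteq> F_span F (u ` B)"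
    proof
      fix y assume "y \<in> range (\<lambda>i. x $ i)"
      then obtain i where y: "y = x $ i" by blast
      have "x $ i = (\<Sum>b\<in>B. (b $ i) * u b)" by (simp add: x mult.commute)
      also have "\<dots> \<in> F_span F (u ` B)"
        by (rule F_span_comb[OF F_sub _ fB]) (use BF in \<open>auto simp: Fvec_def intro: F_span_base[OF F_sub]\<close>)
      finally show "y \<in> F_span F (u ` B)" using y by simp
    qed
    have "F_span F (range (\<lambda>i. x $ i)) \<subseteq> F_span F (u ` B)"
      by (rule F_span_mono_span[OF F_sub _ sub]) simp
    then have "rk F x \<le> card (u ` B)" unfolding rk_def
      by (rule F_dim_le[OF F_sub, rotated]) simp
    also have "\<dots> \<le> card B" by (rule card_image_le[OF fB])
    finally show "rk F x \<le> v" using cardB by simp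
  qed
  have part1: "rank_diameter F V \<le> v" unfolding rank_diameter_def
    using le fV V0 by (subst Max_le_iff) auto
  have part2: "rank_diameter F V = v" if vm: "v \<le> m"
  proof -
    have cardk: "CARD('k) = card F ^ m" using K_card F_card by simp
    obtain D where D: "F_indep F D" "m \<le> card D" using exists_indep[OF F_sub cardk] by blast
    have fD: "finite D" using D(1) unfolding F_indep_def by blast
    have "v \<le> card D" using D(2) vm by simp
    then obtain C where C: "C \<subseteq> D" "card C = v" "finite C" by (rule obtain_subset_with_card_n)
    have indC: "F_indep F C" by (rule indep_subset[OF F_sub D(1) C(1)])
    have "card B = card C" using cardB C(2) by simp
    then obtain c where c: "bij_betw c B C" using finite_same_card_bij[OF fB C(3)] by blast
    define x where "x = (\<Sum>b\<in>B. c b *s b)"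
    have xV: "x \<in> V" unfolding x_def B(3)[symmetric]
      by (intro vec.span_sum vec.span_scale vec.span_base)
    have dual: "\<forall>b\<in>B. \<exists>a. a \<in> Fvec F \<and> (\<forall>b'\<in>B. dotF b' a = (if b' = b then 1 else 0))"
      by (rule dual_basis[OF F_sub fB BF B(2)])
    have CinS: "C \<subseteq> F_span F (range (\<lambda>i. x $ i))"
    proof
      fix y assume "y \<in> C"
      then have "y \<in> c ` B" using c unfolding bij_betw_def by simp
      then obtain b0 where b0: "b0 \<in> B" "y = c b0" by blast
      obtain a where a: "a \<in> Fvec F" "\<forall>b'\<in>B. dotF b' a = (if b' = b0 then 1 else 0)"
        using dual b0(1) by blast
      have "(\<Sum>i\<in>UNIV. a $ i * x $ i) = (\<Sum>i\<in>UNIV. \<Sum>b\<in>B. a $ i * (c b * b $ i))"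
        by (simp add: x_def sum_distrib_left)
      also have "\<dots> = (\<Sum>b\<in>B. \<Sum>i\<in>UNIV. c b * (b $ i * a $ i))"
        by (subst sum.swap) (simp add: ac_simps)
      also have "\<dots> = (\<Sum>b\<in>B. c b * dotF b a)"
        by (simp add: dotF_def sum_distrib_left)
      also have "\<dots> = (\<Sum>b\<in>B. if b = b0 then c b else 0)"
        by (rule sum.cong[OF refl]) (use a in auto)
      also have "\<dots> = c b0" using b0 fB by simp
      finally have eq: "(\<Sum>i\<in>UNIV. a $ i * x $ i) = c b0" .
      have "(\<Sum>i\<in>UNIV. a $ i * x $ i) \<in> F_span F (range (\<lambda>i. x $ i))"
        by (rule F_span_comb[OF F_sub]) (use a in \<open>auto simp: Fvec_def intro: F_span_base[OF F_sub]\<close>)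
      then show "y \<in> F_span F (range (\<lambda>i. x $ i))" using eq b0 by simp
    qed
    have "v \<le> rk F x" unfolding rk_def using F_dim_ge[OF CinS indC] C(2) by simp
    moreover have "rk F x \<le> rank_diameter F V" unfolding rank_diameter_def
      using xV fV by (intro Max_ge) auto
    ultimately show ?thesis using part1 by simp
  qed
  show ?thesis using part1 part2 by blast
qed

end
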